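(* Assume (C1) and (C2). For all $u\in\mathcal{D}$ and all $s,t\ge0$, $$I(u)\ge I(su^++tu^-)+\frac{1-s^q}{q}\langle I'(u),u^+\rangle+\frac{1-t^q}{q}\langle I'(u),u^-\rangle+\Big(\frac{1-s^p}{p}-\frac{1-s^q}{q}\Big)\|u^+\|^p+\Big(\frac{1-t^p}{p}-\frac{1-t^q}{q}\Big)\|u^-\|^p+\sum_{n\in\mathbb{Z}}a(n)\sum_{i=1}^{\frac p2-1}\sum_{j=1}^{i-1}2^{i-j}\big|(\Delta u^+(n))^{p-(i+j)}(\Delta u^-(n))^{i+j}\big|\,\Theta_{i,j},$$ where $$\Theta_{i,j}=\frac{2s^pC_{\frac p2-1}^iC_i^j+s^pC_{\frac p2-1}^{i-1}C_{i-1}^j+2t^pC_{\frac p2-1}^{i-1}C_{i-1}^{j-1}+t^pC_{\frac p2-1}^{i-1}C_{i-1}^j-2s^{p-(i+j)}t^{i+j}C_{\frac p2}^iC_i^j}{2p}\ge0.$$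
   Context: Fix real numbers $p,q,r$ with $1<p<q$, $\frac p2$ a positive integer, and $r\ge1$, and functions $a,b,c:\mathbb{Z}\to(0,+\infty)$. Conditions: - (C1) There is $b_0>0$ with $b(n)\ge b_0$ for all $n$ and $b(n)\to+\infty$ as $|n|\to\infty$. - (C2) There is $c_0>0$ with $c(n)\le c_0$ for all $n$ and $\sum_n c(n)<+\infty$. Notation: - $C_n^k=\binom nk$ is the binomial coefficient. - For a real sequence $u=(u(n))_{n\in\mathbb{Z}}$: $\Delta u(n)=u(n+1)-u(n)$, $u^+(n)=\max\{u(n),0\}$, $u^-(n)=\min\{u(n),0\}$. Spaces: - $E$ is the set of real sequences $u$ with $\|u\|:=\big(\sum_n[a(n)|\Delta u(n)|^p+b(n)|u(n)|^p]\big)^{1/p}<\infty$. - $\mathcal{D}=\{u\in E:\sum_n c(n)|u(n)|^q\ln|u(n)|^r<+\infty\}$, where terms with $u(n)=0$ are read as $0$. For $u,v\in\mathcal{D}$: - $I(u)=\frac1p\|u\|^p+\frac{r}{q^2}\sum_n c(n)|u(n)|^q-\frac1q\sum_n c(n)|u(n)|^q\ln|u(n)|^r$. - $\langle I'(u),v\rangle=\sum_n[a(n)|\Delta u(n)|^{p-2}\Delta u(n)\Delta v(n)+b(n)|u(n)|^{p-2}u(n)v(n)]-\sum_n c(n)|u(n)|^{q-2}u(n)v(n)\ln|u(n)|^r$. *)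

theory Defs
  imports "HOL-Analysis.Analysis"
begin

definition Delta :: "(int \<Rightarrow> real) \<Rightarrow> int \<Rightarrow> real" where
  "Delta u n = u (n + 1) - u n"

definition posp :: "(int \<Rightarrow> real) \<Rightarrow> int \<Rightarrow> real" where
  "posp u n = max (u n) 0"

definition negp :: "(int \<Rightarrow> real) \<Rightarrow> int \<Rightarrow> real" where
  "negp u n = min (u n) 0"

definition Eterm :: "(int \<Rightarrow> real) \<Rightarrow> (int \<Rightarrow> real) \<Rightarrow> real \<Rightarrow> (int \<Rightarrow> real) \<Rightarrow> int \<Rightarrow> real" where
  "Eterm a b p u n = a n * \<bar>Delta u n\<bar> powr p + b n * \<bar>u n\<bar> powr p"

definition inE :: "(int \<Rightarrow> real) \<Rightarrow> (int \<Rightarrow> real) \<Rightarrow> real \<Rightarrow> (int \<Rightarrow> real) \<Rightarrow> bool" where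
  "inE a b p u \<longleftrightarrow> Eterm a b p u summable_on UNIV"

definition normE :: "(int \<Rightarrow> real) \<Rightarrow> (int \<Rightarrow> real) \<Rightarrow> real \<Rightarrow> (int \<Rightarrow> real) \<Rightarrow> real" where
  "normE a b p u = (\<Sum>\<^sub>\<infinity>n. Eterm a b p u n) powr (1 / p)"

text \<open>The set D: u in E and the logarithmic series converges (terms with u n = 0 are 0).\<close>
definition inD :: "(int \<Rightarrow> real) \<Rightarrow> (int \<Rightarrow> real) \<Rightarrow> (int \<Rightarrow> real) \<Rightarrow> real \<Rightarrow> real \<Rightarrow> real
    \<Rightarrow> (int \<Rightarrow> real) \<Rightarrow> bool" where
  "inD a b c p q r u \<longleftrightarrow> inE a b p u \<and>
     (\<lambda>n. c n * \<bar>u n\<bar> powr q * ln (\<bar>u n\<bar> powr r)) summable_on UNIV"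

definition Ifun :: "(int \<Rightarrow> real) \<Rightarrow> (int \<Rightarrow> real) \<Rightarrow> (int \<Rightarrow> real) \<Rightarrow> real \<Rightarrow> real \<Rightarrow> real
    \<Rightarrow> (int \<Rightarrow> real) \<Rightarrow> real" where
  "Ifun a b c p q r u =
     1 / p * normE a b p u powr p
     + r / q\<^sup>2 * (\<Sum>\<^sub>\<infinity>n. c n * \<bar>u n\<bar> powr q)
     - 1 / q * (\<Sum>\<^sub>\<infinity>n. c n * \<bar>u n\<bar> powr q * ln (\<bar>u n\<bar> powr r))"

definition dI :: "(int \<Rightarrow> real) \<Rightarrow> (int \<Rightarrow> real) \<Rightarrow> (int \<Rightarrow> real) \<Rightarrow> real \<Rightarrow> real \<Rightarrow> real
    \<Rightarrow> (int \<Rightarrow> real) \<Rightarrow> (int \<Rightarrow> real) \<Rightarrow> real" where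
  "dI a b c p q r u v =
     (\<Sum>\<^sub>\<infinity>n. a n * \<bar>Delta u n\<bar> powr (p - 2) * Delta u n * Delta v n
            + b n * \<bar>u n\<bar> powr (p - 2) * u n * v n)
     - (\<Sum>\<^sub>\<infinity>n. c n * \<bar>u n\<bar> powr (q - 2) * u n * v n * ln (\<bar>u n\<bar> powr r))"

text \<open>Theta_{i,j}; K stands for p/2 (a natural number), so p = 2K.\<close>
definition Theta :: "real \<Rightarrow> nat \<Rightarrow> real \<Rightarrow> real \<Rightarrow> nat \<Rightarrow> nat \<Rightarrow> real" where
  "Theta p K s t i j =
     (2 * s powr p * real ((K - 1) choose i) * real (i choose j)
      + s powr p * real ((K - 1) choose (i - 1)) * real ((i - 1) choose j)
      + 2 * t powr p * real ((K - 1) choose (i - 1)) * real ((i - 1) choose (j - 1))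
      + t powr p * real ((K - 1) choose (i - 1)) * real ((i - 1) choose j)
      - 2 * s ^ (2 * K - (i + j)) * t ^ (i + j) * real (K choose i) * real (i choose j))
     / (2 * p)"

end

theory Submission
  imports Defs
begin


lemma F1:
  fixes X Y :: real
  shows "(X+Y)^(2*K) = (\<Sum>i=0..K. \<Sum>j=0..i. real (K choose i) * real (i choose j) * 2^(i-j) * X^(2*K-i-j) * Y^(i+j))"
proof -
  have "(X+Y)^2 = (Y^2 + 2*X*Y) + X^2" by algebra
  then have "(X+Y)^(2*K) = ((Y^2 + 2*X*Y) + X^2)^K"
    by (simp add: power_mult)
  also have "\<dots> = (\<Sum>i\<le>K. real (K choose i) * (Y^2 + 2*X*Y)^i * (X^2)^(K-i))"
    by (rule binomial_ring)
  also have "\<dots> = (\<Sum>i\<le>K. real (K choose i) * (\<Sum>j\<le>i. real (i choose j) * (Y^2)^j * (2*X*Y)^(i-j)) * (X^2)^(K-i))"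
    by (simp add: binomial_ring)
  also have "\<dots> = (\<Sum>i=0..K. \<Sum>j=0..i. real (K choose i) * real (i choose j) * 2^(i-j) * X^(2*K-i-j) * Y^(i+j))"
    unfolding atMost_atLeast0
  proof (intro sum.cong refl)
    fix i assume i: "i \<in> {0..K}"
    have "real (K choose i) * (\<Sum>j=0..i. real (i choose j) * (Y^2)^j * (2*X*Y)^(i-j)) * (X^2)^(K-i)
       = (\<Sum>j=0..i. real (K choose i) * (real (i choose j) * (Y^2)^j * (2*X*Y)^(i-j)) * (X^2)^(K-i))"
      by (simp add: sum_distrib_left sum_distrib_right)
    also have "\<dots> = (\<Sum>j=0..i. real (K choose i) * real (i choose j) * 2^(i-j) * X^(2*K-i-j) * Y^(i+j))"
    proof (intro sum.cong refl)
      fix j assume j: "j \<in> {0..i}"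
      have e1': "2*K-i-j = (i-j) + 2*(K-i)" using i j by auto
      have e2': "i+j = 2*j + (i-j)" using j by auto
      have e1: "X^(2*K-i-j) = X^(i-j) * (X^2)^(K-i)"
        unfolding e1' by (simp add: power_add power_mult)
      have e2: "Y^(i+j) = (Y^2)^j * Y^(i-j)"
        by (subst e2') (simp add: power_add power_mult)
      show "real (K choose i) * (real (i choose j) * (Y^2)^j * (2*X*Y)^(i-j)) * (X^2)^(K-i)
          = real (K choose i) * real (i choose j) * 2^(i-j) * X^(2*K-i-j) * Y^(i+j)"
        unfolding e1 e2 by (simp add: power_add power_mult power_mult_distrib algebra_simps)
    qed
    finally show "real (K choose i) * (\<Sum>j=0..i. real (i choose j) * (Y^2)^j * (2*X*Y)^(i-j)) * (X^2)^(K-i)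
       = (\<Sum>j=0..i. real (K choose i) * real (i choose j) * 2^(i-j) * X^(2*K-i-j) * Y^(i+j))" .
  qed
  finally show ?thesis .
qed

lemma F2:
  fixes X Y :: real
  shows "(\<Sum>i=0..K. \<Sum>j=0..i. real (K choose i) * real (i choose j) * 2^(i-j) * X^(2*K-i-j) * (real (i+j) * Y^(i+j)))
     = real (2*K) * Y * (X+Y)^(2*K-1)"
proof -
  define f where "f = (\<lambda>y. \<Sum>i=0..K. \<Sum>j=0..i. real (K choose i) * real (i choose j) * 2^(i-j) * X^(2*K-i-j) * y^(i+j))"
  have feq: "f = (\<lambda>y. (X+y)^(2*K))" unfolding f_def by (rule ext) (rule F1[symmetric])
  have d1: "(f has_real_derivative (\<Sum>i=0..K. \<Sum>j=0..i. real (K choose i) * real (i choose j) * 2^(i-j) * X^(2*K-i-j) * (real (i+j) * Y^(i+j-1)))) (at Y)"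
    unfolding f_def by (intro DERIV_sum DERIV_cmult) (metis DERIV_pow One_nat_def)
  have d2: "(f has_real_derivative real (2*K) * (X+Y)^(2*K-1)) (at Y)"
    unfolding feq by (auto intro!: derivative_eq_intros)
  have eq: "(\<Sum>i=0..K. \<Sum>j=0..i. real (K choose i) * real (i choose j) * 2^(i-j) * X^(2*K-i-j) * (real (i+j) * Y^(i+j-1))) = real (2*K) * (X+Y)^(2*K-1)"
    using DERIV_unique[OF d1 d2] .
  have "(\<Sum>i=0..K. \<Sum>j=0..i. real (K choose i) * real (i choose j) * 2^(i-j) * X^(2*K-i-j) * (real (i+j) * Y^(i+j)))
     = Y * (\<Sum>i=0..K. \<Sum>j=0..i. real (K choose i) * real (i choose j) * 2^(i-j) * X^(2*K-i-j) * (real (i+j) * Y^(i+j-1)))"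
    unfolding sum_distrib_left
  proof (intro sum.cong refl)
    fix i j :: nat
    have "real (i+j) * Y^(i+j) = Y * (real (i+j) * Y^(i+j-1))"
      by (cases "i+j") (auto simp: algebra_simps)
    then show "real (K choose i) * real (i choose j) * 2^(i-j) * X^(2*K-i-j) * (real (i+j) * Y^(i+j))
      = Y * (real (K choose i) * real (i choose j) * 2^(i-j) * X^(2*K-i-j) * (real (i+j) * Y^(i+j-1)))"
      by (simp add: algebra_simps)
  qed
  also have "\<dots> = real (2*K) * Y * (X+Y)^(2*K-1)" using eq by simp
  finally show ?thesis .
qed




lemma amgm:
  fixes s t :: real and m P :: nat
  assumes "s \<ge> 0" "t \<ge> 0" "m \<le> P" "P > 0"
  shows "s^(P-m) * t^m \<le> (1 - real m / real P) * s^P + (real m / real P) * t^P"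
proof (cases "s > 0 \<and> t > 0")
  case True
  have w: "0 \<le> 1 - real m / real P" "0 \<le> real m / real P" using assms by auto
  have "(s^P) powr (1 - real m / real P) * (t^P) powr (real m / real P) \<le> (1 - real m / real P) * s^P + (real m / real P) * t^P"
    by (rule Youngs_inequality_0) (use w True in auto)
  moreover have "(s^P) powr (1 - real m / real P) = s^(P-m)"
  proof -
    have "(s^P) powr (1 - real m / real P) = s powr (real P * (1 - real m / real P))"
      using True by (simp add: powr_realpow[symmetric] powr_powr)
    also have "real P * (1 - real m / real P) = real (P - m)" using assms by (simp add: of_nat_diff field_simps)
    finally show ?thesis using True by (simp add: powr_realpow)
  qed
  moreover have "(t^P) powr (real m / real P) = t^m"
  proof -
    have "(t^P) powr (real m / real P) = t powr (real P * (real m / real P))"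
      using True by (simp add: powr_realpow[symmetric] powr_powr)
    also have "real P * (real m / real P) = real m" using assms by simp
    finally show ?thesis using True by (simp add: powr_realpow)
  qed
  ultimately show ?thesis by simp
next
  case False
  have w: "0 \<le> 1 - real m / real P" "0 \<le> real m / real P" using assms by auto
  have nn: "0 \<le> (1 - real m / real P) * s^P + (real m / real P) * t^P"
    using w assms by (intro add_nonneg_nonneg mult_nonneg_nonneg) auto
  show ?thesis
  proof (cases "s = 0")
    case s0: True
    show ?thesis
    proof (cases "m = P")
      case True then show ?thesis using s0 assms by simp
    next
      case False then have "P - m > 0" using assms by auto
      then have z: "s^(P-m) * t^m = 0" using s0 by simp
      show ?thesis unfolding z using nn by simp
    qed
  next
    case sn: False
    then have t0: "t = 0" using False assms by auto
    show ?thesis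
    proof (cases "m = 0")
      case True then show ?thesis using t0 assms by simp
    next
      case False then have z: "s^(P-m) * t^m = 0" using t0 by simp
      show ?thesis unfolding z using nn by simp
    qed
  qed
qed

lemma qp_mono:
  fixes s p q :: real
  assumes "s \<ge> 0" "0 < p" "p < q"
  shows "(1 - s powr q) / q \<le> (1 - s powr p) / p"
proof (cases "s = 0")
  case True then show ?thesis using assms by (simp add: frac_le)
next
  case False
  then have sp: "s > 0" using assms by auto
  define z where "z = s powr q"
  have zp: "z > 0" using sp by (simp add: z_def)
  have "z powr (p/q) * 1 powr (1 - p/q) \<le> (p/q) * z + (1 - p/q) * 1"
    by (rule Youngs_inequality_0) (use assms zp in auto)
  moreover have "z powr (p/q) = s powr p" unfolding z_def using assms by (simp add: powr_powr)
  ultimately have h: "s powr p \<le> (p/q) * s powr q + (1 - p/q)" by (simp add: z_def)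
  have "q * s powr p \<le> q * ((p/q) * s powr q + (1 - p/q))"
    by (rule mult_left_mono[OF h]) (use assms in simp)
  also have "\<dots> = p * s powr q + (q - p)" using assms by (simp add: field_simps)
  finally have h2: "q * s powr p \<le> p * s powr q + (q - p)" .
  have e1: "(1 - s powr q)/q = p*(1 - s powr q)/(p*q)" using assms by simp
  have e2: "(1 - s powr p)/p = q*(1 - s powr p)/(p*q)" using assms by simp
  have "p*(1 - s powr q) \<le> q*(1 - s powr p)" using h2 by (simp add: algebra_simps)
  then show ?thesis unfolding e1 e2 by (rule divide_right_mono) (use assms in simp)
qed

lemma binid:
  assumes "1 \<le> j" "j \<le> i" "i \<le> K"
  shows "2 * real (K choose i) * real (i choose j) * (real (i+j) / real (2*K))
     = 2 * real ((K-1) choose (i-1)) * real ((i-1) choose (j-1)) + real ((K-1) choose (i-1)) * real ((i-1) choose j)"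
    and "2 * real (K choose i) * real (i choose j) * (1 - real (i+j) / real (2*K))
     = 2 * real ((K-1) choose i) * real (i choose j) + real ((K-1) choose (i-1)) * real ((i-1) choose j)"
proof -
  obtain K' i' j' where KK: "K = Suc K'" "i = Suc i'" "j = Suc j'"
    using assms by (metis Suc_le_D le_trans One_nat_def Suc_le_lessD less_imp_Suc_add)
  have h1: "real (Suc K') * real (K' choose i') = real (Suc K' choose Suc i') * real (Suc i')"
    using Suc_times_binomial_eq[of K' i'] by (metis of_nat_mult)
  have h2: "real (Suc i') * real (i' choose j') = real (Suc i' choose Suc j') * real (Suc j')"
    using Suc_times_binomial_eq[of i' j'] by (metis of_nat_mult)
  have h3: "real (Suc i' choose Suc j') = real (i' choose j') + real (i' choose Suc j')" by simp
  have h4: "real (Suc K' choose Suc i') = real (K' choose i') + real (K' choose Suc i')" by simp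
  have A: "2 * real (K choose i) * real (i choose j) * (real (i+j) / real (2*K))
     = 2 * real ((K-1) choose (i-1)) * real ((i-1) choose (j-1)) + real ((K-1) choose (i-1)) * real ((i-1) choose j)"
  proof -
    have h5: "real (Suc i') * real (i' choose Suc j') = real(Suc i') * real (Suc i' choose Suc j') - real (Suc i' choose Suc j') * real (Suc j')"
      using h2 h3 by (simp add: algebra_simps)
    have "real K * (2 * real ((K-1) choose (i-1)) * real ((i-1) choose (j-1)) + real ((K-1) choose (i-1)) * real ((i-1) choose j))
      = (real (Suc K') * real (K' choose i')) * (2 * real (i' choose j') + real (i' choose Suc j'))"
      unfolding KK by (simp add: algebra_simps)
    also have "\<dots> = (real (Suc K' choose Suc i') * real (Suc i')) * (2 * real (i' choose j') + real (i' choose Suc j'))"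
      by (simp only: h1)
    also have "\<dots> = real (Suc K' choose Suc i') * (2 * (real (Suc i') * real (i' choose j')) + real (Suc i') * real (i' choose Suc j'))"
      by algebra
    also have "\<dots> = real (Suc K' choose Suc i') * (2 * (real (Suc i' choose Suc j') * real (Suc j')) + (real(Suc i') * real (Suc i' choose Suc j') - real (Suc i' choose Suc j') * real (Suc j')))"
      by (simp only: h2 h5)
    also have "\<dots> = real (K choose i) * real (i choose j) * real (i + j)"
      unfolding KK by (simp add: algebra_simps)
    finally show ?thesis using assms KK by (simp add: field_simps)
  qed
  then show "2 * real (K choose i) * real (i choose j) * (real (i+j) / real (2*K))
     = 2 * real ((K-1) choose (i-1)) * real ((i-1) choose (j-1)) + real ((K-1) choose (i-1)) * real ((i-1) choose j)" .
  show "2 * real (K choose i) * real (i choose j) * (1 - real (i+j) / real (2*K))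
     = 2 * real ((K-1) choose i) * real (i choose j) + real ((K-1) choose (i-1)) * real ((i-1) choose j)"
    using A h3 h4 unfolding KK by (simp add: algebra_simps)
qed




lemma drop_sum:
  fixes f :: "nat \<Rightarrow> nat \<Rightarrow> real"
  assumes "\<And>i j. i \<le> K \<Longrightarrow> j \<le> i \<Longrightarrow> f i j \<ge> 0"
  shows "(\<Sum>i=1..K-1. \<Sum>j=1..i-1. f i j) \<le> (\<Sum>i=0..K. \<Sum>j=0..i. f i j)"
proof -
  have "(\<Sum>i=1..K-1. \<Sum>j=1..i-1. f i j) \<le> (\<Sum>i=1..K-1. \<Sum>j=0..i. f i j)"
    by (intro sum_mono sum_mono2) (auto intro: assms)
  also have "\<dots> \<le> (\<Sum>i=0..K. \<Sum>j=0..i. f i j)"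
    by (intro sum_mono2 sum_nonneg) (auto intro: assms)
  finally show ?thesis .
qed

lemma Qlem:
  fixes X Y s t :: real
  assumes K: "K \<ge> 1" and XY: "X \<ge> 0" "Y \<ge> 0" and st: "s \<ge> 0" "t \<ge> 0"
  shows "s^(2*K)*((X+Y)^(2*K-1)*X) + t^(2*K)*((X+Y)^(2*K-1)*Y) - (s*X+t*Y)^(2*K)
     \<ge> real (2*K) * (\<Sum>i=1..K-1. \<Sum>j=1..i-1. 2^(i-j) * (X^(2*K-(i+j)) * Y^(i+j)) * Theta (2*real K) K s t i j)"
proof -
  define c where "c i j = real (K choose i) * real (i choose j)" for i j
  define M where "M i j = (2::real)^(i-j) * X^(2*K-(i+j)) * Y^(i+j)" for i j :: nat
  define w where "w i j = real (i+j) / real (2*K)" for i j :: nat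
  define B where "B i j = (1 - w i j) * s^(2*K) + w i j * t^(2*K) - s^(2*K-(i+j)) * t^(i+j)" for i j
  have S1: "(\<Sum>i=0..K. \<Sum>j=0..i. c i j * M i j) = (X+Y)^(2*K)"
    unfolding F1[of X Y K] c_def M_def by (intro sum.cong refl) (simp add: algebra_simps)
  have S2: "(\<Sum>i=0..K. \<Sum>j=0..i. c i j * M i j * w i j) = Y * (X+Y)^(2*K-1)"
  proof -
    have "(\<Sum>i=0..K. \<Sum>j=0..i. c i j * M i j * w i j) = (\<Sum>i=0..K. \<Sum>j=0..i. real (K choose i) * real (i choose j) * 2^(i-j) * X^(2*K-i-j) * (real (i+j) * Y^(i+j))) / real (2*K)"
      unfolding c_def M_def w_def sum_divide_distrib by (intro sum.cong refl) (simp add: algebra_simps)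
    also have "\<dots> = Y * (X+Y)^(2*K-1)" unfolding F2 using K by simp
    finally show ?thesis .
  qed
  have S3: "(\<Sum>i=0..K. \<Sum>j=0..i. c i j * M i j * (1 - w i j)) = X * (X+Y)^(2*K-1)"
  proof -
    have "(\<Sum>i=0..K. \<Sum>j=0..i. c i j * M i j * (1 - w i j)) = (\<Sum>i=0..K. \<Sum>j=0..i. c i j * M i j) - (\<Sum>i=0..K. \<Sum>j=0..i. c i j * M i j * w i j)"
      by (simp add: sum_subtractf algebra_simps)
    also have "\<dots> = (X+Y)^(2*K) - Y * (X+Y)^(2*K-1)" unfolding S1 S2 ..
    also have "(X+Y)^(2*K) = (X+Y) * (X+Y)^(2*K-1)" using K
      by (metis One_nat_def Suc_pred mult_pos_pos power_Suc pos2 less_le_trans zero_less_one)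
    finally show ?thesis by (simp add: algebra_simps)
  qed
  have S4: "(s*X+t*Y)^(2*K) = (\<Sum>i=0..K. \<Sum>j=0..i. c i j * M i j * (s^(2*K-(i+j)) * t^(i+j)))"
    unfolding F1[of "s*X" "t*Y" K] c_def M_def by (intro sum.cong refl) (simp add: power_mult_distrib algebra_simps)
  have LHS: "s^(2*K)*((X+Y)^(2*K-1)*X) + t^(2*K)*((X+Y)^(2*K-1)*Y) - (s*X+t*Y)^(2*K)
      = (\<Sum>i=0..K. \<Sum>j=0..i. M i j * (c i j * B i j))"
  proof -
    have "s^(2*K)*((X+Y)^(2*K-1)*X) + t^(2*K)*((X+Y)^(2*K-1)*Y) - (s*X+t*Y)^(2*K)
      = s^(2*K) * (\<Sum>i=0..K. \<Sum>j=0..i. c i j * M i j * (1 - w i j)) + t^(2*K) * (\<Sum>i=0..K. \<Sum>j=0..i. c i j * M i j * w i j)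
        - (\<Sum>i=0..K. \<Sum>j=0..i. c i j * M i j * (s^(2*K-(i+j)) * t^(i+j)))"
      unfolding S2 S3 S4 by (simp add: algebra_simps)
    also have "\<dots> = (\<Sum>i=0..K. \<Sum>j=0..i. M i j * (c i j * B i j))"
      unfolding B_def sum_distrib_left sum_subtractf[symmetric] sum.distrib[symmetric]
      by (intro sum.cong refl) (simp add: algebra_simps)
    finally show ?thesis .
  qed
  have nn: "M i j * (c i j * B i j) \<ge> 0" if "i \<le> K" "j \<le> i" for i j
  proof -
    have "B i j \<ge> 0" unfolding B_def w_def using amgm[of s t "i+j" "2*K"] st that K by simp
    moreover have "M i j \<ge> 0" "c i j \<ge> 0" unfolding M_def c_def using XY by auto
    ultimately show ?thesis by simp
  qed
  have sp: "s powr (2 * real K) = s^(2*K)" "t powr (2 * real K) = t^(2*K)"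
    using powr_realpow'[of s "2*K"] powr_realpow'[of t "2*K"] st K by auto
  have eqr: "M i j * (c i j * B i j) = real (2*K) * (2^(i-j) * (X^(2*K-(i+j)) * Y^(i+j)) * Theta (2*real K) K s t i j)"
    if "i \<in> {1..K-1}" "j \<in> {1..i-1}" for i j
  proof -
    have ij: "1 \<le> j" "j \<le> i" "i \<le> K" using that by auto
    have E: "2 * c i j * w i j = 2 * real ((K-1) choose (i-1)) * real ((i-1) choose (j-1)) + real ((K-1) choose (i-1)) * real ((i-1) choose j)"
       "2 * c i j * (1 - w i j) = 2 * real ((K-1) choose i) * real (i choose j) + real ((K-1) choose (i-1)) * real ((i-1) choose j)"
      using binid[OF ij] unfolding c_def w_def by auto
    have T: "Theta (2*real K) K s t i j = (s^(2*K) * (2 * real ((K-1) choose i) * real (i choose j) + real ((K-1) choose (i-1)) * real ((i-1) choose j))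
       + t^(2*K) * (2 * real ((K-1) choose (i-1)) * real ((i-1) choose (j-1)) + real ((K-1) choose (i-1)) * real ((i-1) choose j))
       - 2 * (s^(2*K-(i+j)) * t^(i+j)) * c i j) / (2 * (2 * real K))"
      unfolding Theta_def sp c_def by (simp add: algebra_simps)
    have "real (2*K) * Theta (2*real K) K s t i j = c i j * B i j"
      unfolding T E[symmetric] B_def using K by (simp add: field_simps)
    then show ?thesis unfolding M_def by (simp add: algebra_simps)
  qed
  have "(\<Sum>i=1..K-1. \<Sum>j=1..i-1. M i j * (c i j * B i j)) \<le> (\<Sum>i=0..K. \<Sum>j=0..i. M i j * (c i j * B i j))"
    by (rule drop_sum) (rule nn)
  moreover have "(\<Sum>i=1..K-1. \<Sum>j=1..i-1. M i j * (c i j * B i j))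
     = real (2*K) * (\<Sum>i=1..K-1. \<Sum>j=1..i-1. 2^(i-j) * (X^(2*K-(i+j)) * Y^(i+j)) * Theta (2*real K) K s t i j)"
    unfolding sum_distrib_left by (intro sum.cong refl) (rule eqr)
  ultimately show ?thesis unfolding LHS by simp
qed




lemma Alem:
  fixes X Y s t p q :: real
  assumes K: "K \<ge> 1" and p: "p = 2 * real K" and pq: "p < q"
    and XY: "X \<ge> 0" "Y \<ge> 0" and st: "s \<ge> 0" "t \<ge> 0"
  shows "(1/p)*((X+Y)^(2*K) - (s*X+t*Y)^(2*K)) - (1 - s powr q)/q * ((X+Y)^(2*K-1)*X)
      - (1 - t powr q)/q * ((X+Y)^(2*K-1)*Y)
      - ((1 - s powr p)/p - (1 - s powr q)/q) * X^(2*K) - ((1 - t powr p)/p - (1 - t powr q)/q) * Y^(2*K)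
     \<ge> (\<Sum>i=1..K-1. \<Sum>j=1..i-1. 2^(i-j) * (X^(2*K-(i+j)) * Y^(i+j)) * Theta p K s t i j)"
  (is "?L \<ge> ?S")
proof -
  define Z where "Z = (X+Y)^(2*K-1)"
  have e: "(X+Y)^(2*K) = Z*X + Z*Y" unfolding Z_def using K
    by (metis One_nat_def Suc_pred distrib_left mult.commute mult_pos_pos power_Suc pos2 less_le_trans zero_less_one)
  have sp: "s powr p = s^(2*K)" "t powr p = t^(2*K)"
    using powr_realpow'[of s "2*K"] powr_realpow'[of t "2*K"] st K p by auto
  have pp: "p > 0" using p K by simp
  define Q where "Q = s^(2*K)*(Z*X) + t^(2*K)*(Z*Y) - (s*X+t*Y)^(2*K)"
  have id: "?L = (1/p)*Q + ((1 - s powr p)/p - (1 - s powr q)/q)*(Z*X - X^(2*K)) + ((1 - t powr p)/p - (1 - t powr q)/q)*(Z*Y - Y^(2*K))"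
    unfolding e Q_def sp Z_def[symmetric] using pp pq by (simp add: field_simps)
  have ZX: "Z*X - X^(2*K) \<ge> 0" "Z*Y - Y^(2*K) \<ge> 0"
  proof -
    have "X^(2*K-1) \<le> Z" "Y^(2*K-1) \<le> Z" unfolding Z_def using XY by (auto intro: power_mono)
    moreover have "X^(2*K) = X^(2*K-1)*X" "Y^(2*K) = Y^(2*K-1)*Y" using K
      by (metis One_nat_def Suc_pred mult.commute mult_pos_pos power_Suc pos2 less_le_trans zero_less_one)+
    ultimately show "Z*X - X^(2*K) \<ge> 0" "Z*Y - Y^(2*K) \<ge> 0" using XY by (auto intro: mult_right_mono)
  qed
  have m: "(1 - s powr p)/p - (1 - s powr q)/q \<ge> 0" "(1 - t powr p)/p - (1 - t powr q)/q \<ge> 0"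
    using qp_mono[of s p q] qp_mono[of t p q] st pp pq by auto
  have "Q \<ge> real (2*K) * ?S" unfolding Q_def Z_def p using Qlem[OF K XY st] by simp
  then have "(1/p)*Q \<ge> ?S" using pp p by (simp add: field_simps)
  moreover have "((1 - s powr p)/p - (1 - s powr q)/q)*(Z*X - X^(2*K)) \<ge> 0"
    "((1 - t powr p)/p - (1 - t powr q)/q)*(Z*Y - Y^(2*K)) \<ge> 0" using m ZX by auto
  ultimately show ?thesis unfolding id by linarith
qed




lemma Alem2:
  fixes x y s t p q :: real
  assumes K: "K \<ge> 1" and p: "p = 2 * real K" and pq: "p < q"
    and xy: "x * y \<ge> 0" and st: "s \<ge> 0" "t \<ge> 0"
  shows "(1/p)*((x+y)^(2*K) - (s*x+t*y)^(2*K)) - (1 - s powr q)/q * ((x+y)^(2*K-1)*x)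
      - (1 - t powr q)/q * ((x+y)^(2*K-1)*y)
      - ((1 - s powr p)/p - (1 - s powr q)/q) * x^(2*K) - ((1 - t powr p)/p - (1 - t powr q)/q) * y^(2*K)
     \<ge> (\<Sum>i=1..K-1. \<Sum>j=1..i-1. 2^(i-j) * \<bar>x^(2*K-(i+j)) * y^(i+j)\<bar> * Theta p K s t i j)"
proof (cases "x \<ge> 0 \<and> y \<ge> 0")
  case True
  then show ?thesis using Alem[OF K p pq _ _ st, of x y] by simp
next
  case False
  then have n: "-x \<ge> 0" "-y \<ge> 0" using xy
    by (metis mult_nonneg_nonpos2 mult_nonpos_nonneg mult_neg_pos mult_pos_neg linorder_not_le neg_0_le_iff_le order.strict_iff_order zero_le_mult_iff)+
  have o: "odd (2*K-1)" using K by auto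
  have e1: "(-x + -y)^(2*K) = (x+y)^(2*K)" by (metis minus_add_distrib power_mult power2_minus)
  have e2: "(s*(-x) + t*(-y))^(2*K) = (s*x+t*y)^(2*K)"
    by (metis minus_add_distrib mult_minus_right power_mult power2_minus)
  have e3: "(-x + -y)^(2*K-1) = - ((x+y)^(2*K-1))" using o by (metis minus_add_distrib power_minus_odd)
  have e4: "(-x)^(2*K) = x^(2*K)" "(-y)^(2*K) = y^(2*K)" by (metis power_mult power2_minus)+
  have e5: "\<bar>(-x)^(2*K-(i+j)) * (-y)^(i+j)\<bar> = \<bar>x^(2*K-(i+j)) * y^(i+j)\<bar>" for i j
    by (simp add: abs_mult power_abs[symmetric])
  have A: "(\<Sum>i=1..K-1. \<Sum>j=1..i-1. 2^(i-j) * ((-x)^(2*K-(i+j)) * (-y)^(i+j)) * Theta p K s t i j)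
     = (\<Sum>i=1..K-1. \<Sum>j=1..i-1. 2^(i-j) * \<bar>x^(2*K-(i+j)) * y^(i+j)\<bar> * Theta p K s t i j)"
  proof (intro sum.cong refl)
    fix i j
    have "(-x)^(2*K-(i+j)) * (-y)^(i+j) \<ge> 0" using n by simp
    then show "2^(i-j) * ((-x)^(2*K-(i+j)) * (-y)^(i+j)) * Theta p K s t i j = 2^(i-j) * \<bar>x^(2*K-(i+j)) * y^(i+j)\<bar> * Theta p K s t i j"
      using e5[of i j] by simp
  qed
  show ?thesis using Alem[OF K p pq n st] unfolding e1 e2 e3 e4 A by simp
qed

lemma pw1:
  fixes z p :: real
  assumes K: "K \<ge> 1" and p: "p = 2 * real K"
  shows "\<bar>z\<bar> powr p = z^(2*K)"
proof -
  have "\<bar>z\<bar> powr p = \<bar>z\<bar>^(2*K)" using powr_realpow'[of "\<bar>z\<bar>" "2*K"] K p by simp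
  then show ?thesis by (simp add: power_abs[symmetric] power_mult)
qed

lemma pw2:
  fixes z p :: real
  assumes K: "K \<ge> 1" and p: "p = 2 * real K"
  shows "\<bar>z\<bar> powr (p - 2) * z = z^(2*K-1)"
proof (cases "z = 0")
  case True then show ?thesis using K by simp
next
  case False
  have "\<bar>z\<bar> powr (p - 2) = \<bar>z\<bar> powr (real (2*K-2))" using p K by (simp add: of_nat_diff)
  also have "\<dots> = \<bar>z\<bar>^(2*K-2)" using False by (simp add: powr_realpow)
  also have "\<dots> = z^(2*K-2)"
  proof -
    have "2*K-2 = 2*(K-1)" by simp
    then show ?thesis by (metis power_even_abs even_mult_iff even_numeral)
  qed
  finally have "\<bar>z\<bar> powr (p - 2) * z = z^(2*K-2) * z" by simp
  also have "\<dots> = z^(2*K-1)" using K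
    by (metis Suc_diff_Suc Suc_1 diff_Suc_1 le_add_diff_inverse mult_2 numeral_2_eq_2 power_Suc2 less_le_trans one_less_numeral_iff semiring_norm(76) Suc_le_lessD add_diff_cancel_left' diff_diff_left mult_le_mono2 one_add_one)
  finally show ?thesis .
qed

lemma cpart:
  fixes W \<sigma> q r :: real
  assumes W: "W > 0" and sg: "\<sigma> \<ge> 0" and q: "q > 0" and r: "r \<ge> 0"
  shows "r/q\<^sup>2 * W powr q - 1/q * (W powr q * ln (W powr r)) - r/q\<^sup>2 * (\<sigma>*W) powr q + 1/q * ((\<sigma>*W) powr q * ln ((\<sigma>*W) powr r))
    + (1 - \<sigma> powr q)/q * (W powr q * ln (W powr r)) \<ge> 0"
proof (cases "\<sigma> = 0")
  case True
  then show ?thesis using W q r by simp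
next
  case False
  then have sp: "\<sigma> > 0" using sg by simp
  define z where "z = \<sigma> powr q"
  have zp: "z > 0" using sp z_def by simp
  have lnz: "ln z = q * ln \<sigma>" using sp by (simp add: z_def ln_powr)
  have l1: "ln (W powr r) = r * ln W" using W by (simp add: ln_powr)
  have l2: "ln ((\<sigma>*W) powr r) = r * ln \<sigma> + r * ln W" using W sp by (simp add: ln_powr ln_mult algebra_simps)
  have m: "(\<sigma>*W) powr q = z * W powr q" using W sp by (simp add: z_def powr_mult)
  have key: "1 - z + z * ln z \<ge> 0"
  proof -
    have "ln (1/z) \<le> 1/z - 1" using zp by (intro ln_le_minus_one) simp
    then have "- ln z \<le> 1/z - 1" using zp by (simp add: ln_div)
    then have "z * (- ln z) \<le> z * (1/z - 1)" using zp by (intro mult_left_mono) auto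
    then show ?thesis using zp by (simp add: algebra_simps)
  qed
  have "r/q\<^sup>2 * W powr q - 1/q * (W powr q * ln (W powr r)) - r/q\<^sup>2 * (\<sigma>*W) powr q + 1/q * ((\<sigma>*W) powr q * ln ((\<sigma>*W) powr r))
    + (1 - \<sigma> powr q)/q * (W powr q * ln (W powr r)) = r/q\<^sup>2 * W powr q * (1 - z + z * ln z)"
    unfolding l1 l2 m z_def[symmetric] lnz using q by (simp add: field_simps power2_eq_square)
  also have "\<dots> \<ge> 0" using key r q W by simp
  finally show ?thesis .
qed




lemma Gid:
  fixes an bn cn p q rq al be ga de DU PU CU LU DV PV CV LV gD dU x y gU U Pp Nn hU DX PX DY PY S :: real
  shows "(1/p*(an*DU + bn*PU) + rq*(cn*CU) - 1/q*(cn*CU*LU)) - ((1/p*(an*DV + bn*PV) + rq*(cn*CV) - 1/q*(cn*CV*LV))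
     + al*((an*gD*dU*x + bn*gU*U*Pp) - cn*hU*U*Pp*LU) + be*((an*gD*dU*y + bn*gU*U*Nn) - cn*hU*U*Nn*LU)
     + ga*(an*DX + bn*PX) + de*(an*DY + bn*PY) + an*S)
   = an*(1/p*DU - 1/p*DV - al*(gD*dU*x) - be*(gD*dU*y) - ga*DX - de*DY - S)
     + bn*(1/p*PU - 1/p*PV - al*(gU*U*Pp) - be*(gU*U*Nn) - ga*PX - de*PY)
     + cn*(rq*CU - 1/q*(CU*LU) - rq*CV + 1/q*(CV*LV) + al*(hU*U*Pp*LU) + be*(hU*U*Nn*LU))"
  by (simp add: algebra_simps)

lemma partA:
  fixes u :: "int \<Rightarrow> real" and n :: int and p q s t :: real
  assumes K: "K \<ge> 1" and p: "p = 2*real K" and pq: "p < q" and st: "s \<ge> 0" "t \<ge> 0"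
  shows "0 \<le> 1 / p * \<bar>Delta u n\<bar> powr p -
         1 / p * \<bar>Delta (\<lambda>n. s * posp u n + t * negp u n) n\<bar> powr p -
         (1 - s powr q) / q * (\<bar>Delta u n\<bar> powr (p - 2) * Delta u n * Delta (posp u) n) -
         (1 - t powr q) / q * (\<bar>Delta u n\<bar> powr (p - 2) * Delta u n * Delta (negp u) n) -
         ((1 - s powr p) / p - (1 - s powr q) / q) * \<bar>Delta (posp u) n\<bar> powr p -
         ((1 - t powr p) / p - (1 - t powr q) / q) * \<bar>Delta (negp u) n\<bar> powr p -
         (\<Sum>i = 1..K - 1. \<Sum>j = 1..i - 1. 2 ^ (i - j) *
                \<bar>Delta (posp u) n ^ (2 * K - (i + j)) * Delta (negp u) n ^ (i + j)\<bar> * Theta p K s t i j)"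
proof -
  have dsum: "Delta u n = Delta (posp u) n + Delta (negp u) n"
    unfolding Delta_def posp_def negp_def by simp
  have dv: "Delta (\<lambda>n. s * posp u n + t * negp u n) n = s * Delta (posp u) n + t * Delta (negp u) n"
    unfolding Delta_def by (simp add: algebra_simps)
  have xy: "Delta (posp u) n * Delta (negp u) n \<ge> 0"
    unfolding Delta_def posp_def negp_def
    by (cases "u n \<ge> 0"; cases "u (n+1) \<ge> 0") (auto simp: max_def min_def mult_le_0_iff zero_le_mult_iff)
  note h = Alem2[OF K p pq xy st]
  show ?thesis unfolding dsum dv pw1[OF K p] pw2[OF K p] using h by (simp add: right_diff_distrib)
qed

lemma partB:
  fixes u :: "int \<Rightarrow> real" and n :: int and p q s t :: real
  assumes K: "K \<ge> 1" and p: "p = 2*real K" and st: "s \<ge> 0" "t \<ge> 0"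
  shows "0 \<le> 1 / p * \<bar>u n\<bar> powr p -
         1 / p * \<bar>s * posp u n + t * negp u n\<bar> powr p -
         (1 - s powr q) / q * (\<bar>u n\<bar> powr (p - 2) * u n * posp u n) -
         (1 - t powr q) / q * (\<bar>u n\<bar> powr (p - 2) * u n * negp u n) -
         ((1 - s powr p) / p - (1 - s powr q) / q) * \<bar>posp u n\<bar> powr p -
         ((1 - t powr p) / p - (1 - t powr q) / q) * \<bar>negp u n\<bar> powr p"
proof -
  have sp: "s powr p = s^(2*K)" "t powr p = t^(2*K)"
    using powr_realpow'[of s "2*K"] powr_realpow'[of t "2*K"] st K p by auto
  have pp: "p > 0" using p K by simp
  have ep: "z^(2*K-1) * z = z^(2*K)" for z :: real
    using K by (metis One_nat_def Suc_pred mult.commute mult_pos_pos power_Suc pos2 less_le_trans zero_less_one)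
  have z: "(0::real)^(2*K) = 0" using K by simp
  show ?thesis
  proof (cases "u n \<ge> 0")
    case True
    then have e: "posp u n = u n" "negp u n = 0" by (auto simp: posp_def negp_def)
    have w: "\<bar>u n\<bar> powr p = (u n)^(2*K)" "\<bar>s * posp u n + t * negp u n\<bar> powr p = s^(2*K) * (u n)^(2*K)"
      "\<bar>u n\<bar> powr (p - 2) * u n * posp u n = (u n)^(2*K)" "\<bar>u n\<bar> powr (p - 2) * u n * negp u n = 0"
      "\<bar>posp u n\<bar> powr p = (u n)^(2*K)" "\<bar>negp u n\<bar> powr p = 0"
      unfolding pw1[OF K p] pw2[OF K p] e using e z by (auto simp: power_mult_distrib ep[simplified])
    show ?thesis unfolding w sp using pp by (simp add: field_simps)
  next
    case False
    then have e: "posp u n = 0" "negp u n = u n" by (auto simp: posp_def negp_def)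
    have w: "\<bar>u n\<bar> powr p = (u n)^(2*K)" "\<bar>s * posp u n + t * negp u n\<bar> powr p = t^(2*K) * (u n)^(2*K)"
      "\<bar>u n\<bar> powr (p - 2) * u n * negp u n = (u n)^(2*K)" "\<bar>u n\<bar> powr (p - 2) * u n * posp u n = 0"
      "\<bar>negp u n\<bar> powr p = (u n)^(2*K)" "\<bar>posp u n\<bar> powr p = 0"
      unfolding pw1[OF K p] pw2[OF K p] e using e z by (auto simp: power_mult_distrib ep[simplified])
    show ?thesis unfolding w sp using pp by (simp add: field_simps)
  qed
qed

lemma sqpow:
  fixes U q :: real
  assumes "U \<noteq> 0"
  shows "\<bar>U\<bar> powr (q - 2) * U * U = \<bar>U\<bar> powr q"
proof -
  have "\<bar>U\<bar> powr 2 = \<bar>U\<bar>^2" using assms by (simp add: powr_numeral)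
  then have a: "U * U = \<bar>U\<bar> powr 2" by (simp add: power2_eq_square)
  have "\<bar>U\<bar> powr (q - 2) * U * U = \<bar>U\<bar> powr (q - 2) * (U * U)" by (simp only: mult.assoc)
  also have "\<dots> = \<bar>U\<bar> powr (q - 2) * \<bar>U\<bar> powr 2" by (simp only: a)
  also have "\<dots> = \<bar>U\<bar> powr (q - 2 + 2)" using assms by (subst powr_add) simp
  finally show ?thesis by simp
qed

lemma partC:
  fixes u :: "int \<Rightarrow> real" and n :: int and q r s t :: real
  assumes q: "q > 0" and r: "r \<ge> 0" and st: "s \<ge> 0" "t \<ge> 0"
  shows "0 \<le> r / q\<^sup>2 * \<bar>u n\<bar> powr q - 1 / q * (\<bar>u n\<bar> powr q * ln (\<bar>u n\<bar> powr r)) -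
         r / q\<^sup>2 * \<bar>s * posp u n + t * negp u n\<bar> powr q +
         1 / q * (\<bar>s * posp u n + t * negp u n\<bar> powr q * ln (\<bar>s * posp u n + t * negp u n\<bar> powr r)) +
         (1 - s powr q) / q * (\<bar>u n\<bar> powr (q - 2) * u n * posp u n * ln (\<bar>u n\<bar> powr r)) +
         (1 - t powr q) / q * (\<bar>u n\<bar> powr (q - 2) * u n * negp u n * ln (\<bar>u n\<bar> powr r))"
proof -
  consider "u n > 0" | "u n < 0" | "u n = 0" by linarith
  then show ?thesis
  proof cases
    case 1
    then have e: "posp u n = u n" "negp u n = 0" "\<bar>s * posp u n + t * negp u n\<bar> = s * \<bar>u n\<bar>"
      using st by (auto simp: posp_def negp_def abs_mult)
    have sq: "\<bar>u n\<bar> powr (q - 2) * u n * u n = \<bar>u n\<bar> powr q"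
      using sqpow[of "u n" q] 1 by simp
    show ?thesis using cpart[of "\<bar>u n\<bar>" s q r] 1 q r st unfolding e(3) unfolding e(1,2) sq by simp
  next
    case 2
    then have e: "posp u n = 0" "negp u n = u n" "\<bar>s * posp u n + t * negp u n\<bar> = t * \<bar>u n\<bar>"
      using st by (auto simp: posp_def negp_def abs_mult)
    have sq: "\<bar>u n\<bar> powr (q - 2) * u n * u n = \<bar>u n\<bar> powr q"
      using sqpow[of "u n" q] 2 by simp
    show ?thesis using cpart[of "\<bar>u n\<bar>" t q r] 2 q r st unfolding e(3) unfolding e(1,2) sq by simp
  next
    case 3
    then show ?thesis by (simp add: posp_def negp_def)
  qed
qed

lemma pointwise:
  fixes u a b c :: "int \<Rightarrow> real" and n :: int and p q r s t :: real
  assumes K: "K \<ge> 1" and p: "p = 2*real K" and pq: "p < q" and r: "r \<ge> 1"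
    and abc: "a n > 0" "b n > 0" "c n > 0" and st: "s \<ge> 0" "t \<ge> 0"
  shows "0 \<le> (1/p * Eterm a b p u n + r/q\<^sup>2 * (c n * \<bar>u n\<bar> powr q) - 1/q * (c n * \<bar>u n\<bar> powr q * ln (\<bar>u n\<bar> powr r)))
   - ((1/p * Eterm a b p (\<lambda>n. s * posp u n + t * negp u n) n + r/q\<^sup>2 * (c n * \<bar>s * posp u n + t * negp u n\<bar> powr q)
        - 1/q * (c n * \<bar>s * posp u n + t * negp u n\<bar> powr q * ln (\<bar>s * posp u n + t * negp u n\<bar> powr r)))
     + (1 - s powr q)/q * ((a n * \<bar>Delta u n\<bar> powr (p-2) * Delta u n * Delta (posp u) n + b n * \<bar>u n\<bar> powr (p-2) * u n * posp u n)
          - c n * \<bar>u n\<bar> powr (q-2) * u n * posp u n * ln (\<bar>u n\<bar> powr r))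
     + (1 - t powr q)/q * ((a n * \<bar>Delta u n\<bar> powr (p-2) * Delta u n * Delta (negp u) n + b n * \<bar>u n\<bar> powr (p-2) * u n * negp u n)
          - c n * \<bar>u n\<bar> powr (q-2) * u n * negp u n * ln (\<bar>u n\<bar> powr r))
     + ((1 - s powr p)/p - (1 - s powr q)/q) * Eterm a b p (posp u) n
     + ((1 - t powr p)/p - (1 - t powr q)/q) * Eterm a b p (negp u) n
     + a n * (\<Sum>i=1..K-1. \<Sum>j=1..i-1. 2^(i-j) * \<bar>Delta (posp u) n ^ (2*K-(i+j)) * Delta (negp u) n ^ (i+j)\<bar> * Theta p K s t i j))"
proof -
  have dsum: "Delta u n = Delta (posp u) n + Delta (negp u) n"
    unfolding Delta_def posp_def negp_def by simp
  have dv: "Delta (\<lambda>n. s * posp u n + t * negp u n) n = s * Delta (posp u) n + t * Delta (negp u) n"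
    unfolding Delta_def by (simp add: algebra_simps)
  have xy: "Delta (posp u) n * Delta (negp u) n \<ge> 0"
    unfolding Delta_def posp_def negp_def
    by (cases "u n \<ge> 0"; cases "u (n+1) \<ge> 0") (auto simp: max_def min_def mult_le_0_iff zero_le_mult_iff)
  show ?thesis
    unfolding Eterm_def
    apply (subst Gid)
    apply (rule add_nonneg_nonneg[OF add_nonneg_nonneg])
    apply (rule mult_nonneg_nonneg, use abc in simp, rule partA[OF K p pq st])
    apply (rule mult_nonneg_nonneg, use abc in simp, rule partB[OF K p st])
    apply (rule mult_nonneg_nonneg, use abc in simp, rule partC, use K p pq r st in auto)
    done
qed


lemma Theta_nonneg:
  fixes s t :: real
  assumes K: "K \<ge> 1" and ij: "1 \<le> j" "j \<le> i" "i \<le> K" and st: "s \<ge> 0" "t \<ge> 0"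
  shows "Theta (2*real K) K s t i j \<ge> 0"
proof -
  define c where "c = real (K choose i) * real (i choose j)"
  define w where "w = real (i+j) / real (2*K)"
  define B where "B = (1 - w) * s^(2*K) + w * t^(2*K) - s^(2*K-(i+j)) * t^(i+j)"
  have sp: "s powr (2 * real K) = s^(2*K)" "t powr (2 * real K) = t^(2*K)"
    using powr_realpow'[of s "2*K"] powr_realpow'[of t "2*K"] st K by auto
  have E: "2 * c * w = 2 * real ((K-1) choose (i-1)) * real ((i-1) choose (j-1)) + real ((K-1) choose (i-1)) * real ((i-1) choose j)"
     "2 * c * (1 - w) = 2 * real ((K-1) choose i) * real (i choose j) + real ((K-1) choose (i-1)) * real ((i-1) choose j)"
    using binid[OF ij] unfolding c_def w_def by auto
  have T: "Theta (2*real K) K s t i j = (s^(2*K) * (2 * real ((K-1) choose i) * real (i choose j) + real ((K-1) choose (i-1)) * real ((i-1) choose j))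
     + t^(2*K) * (2 * real ((K-1) choose (i-1)) * real ((i-1) choose (j-1)) + real ((K-1) choose (i-1)) * real ((i-1) choose j))
     - 2 * (s^(2*K-(i+j)) * t^(i+j)) * c) / (2 * (2 * real K))"
    unfolding Theta_def sp c_def by (simp add: algebra_simps)
  have "Theta (2*real K) K s t i j = c * B / real (2*K)"
    unfolding T E[symmetric] B_def using K by (simp add: field_simps)
  moreover have "B \<ge> 0" unfolding B_def w_def using amgm[of s t "i+j" "2*K"] st ij K by simp
  moreover have "c \<ge> 0" unfolding c_def by simp
  ultimately show ?thesis by simp
qed

lemma summable_bound:
  fixes f g :: "'a \<Rightarrow> real"
  assumes "g summable_on A" "\<And>x. \<bar>f x\<bar> \<le> g x"
  shows "f summable_on A"
proof -
  have "(\<lambda>x. norm (g x)) summable_on A" using assms(1) summable_on_iff_abs_summable_on_real by blast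
  then have "(\<lambda>x. norm (f x)) summable_on A"
    by (rule Infinite_Sum.abs_summable_on_comparison_test) (simp, meson abs_ge_self assms(2) order_trans)
  then show ?thesis using summable_on_iff_abs_summable_on_real by blast
qed

lemma has_sum_diff':
  fixes f g :: "'a \<Rightarrow> real"
  assumes "(f has_sum x) A" "(g has_sum y) A"
  shows "((\<lambda>n. f n - g n) has_sum (x - y)) A"
proof -
  have "((\<lambda>n. - g n) has_sum (- y)) A" using assms(2) by (simp add: has_sum_uminus)
  from has_sum_add[OF assms(1) this] show ?thesis by simp
qed

lemma normE_pow:
  assumes "p > 0" "\<And>n. a n > 0" "\<And>n. b n > 0"
  shows "normE a b p w powr p = (\<Sum>\<^sub>\<infinity>n. Eterm a b p w n)"
proof -
  have "(\<Sum>\<^sub>\<infinity>n. Eterm a b p w n) \<ge> 0"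
    by (intro infsum_nonneg) (simp add: Eterm_def assms(2,3) less_imp_le)
  then show ?thesis unfolding normE_def using assms(1) by (simp add: powr_powr)
qed


lemma combine:
  fixes f1 f2 f3 f4 f5 f6 f7 f8 f9 f10 f11 f12 f13 :: "int \<Rightarrow> real"
  assumes "(f1 has_sum V1) UNIV" "(f2 has_sum V2) UNIV" "(f3 has_sum V3) UNIV" "(f4 has_sum V4) UNIV"
    "(f5 has_sum V5) UNIV" "(f6 has_sum V6) UNIV" "(f7 has_sum V7) UNIV" "(f8 has_sum V8) UNIV"
    "(f9 has_sum V9) UNIV" "(f10 has_sum V10) UNIV" "(f11 has_sum V11) UNIV" "(f12 has_sum V12) UNIV"
    "(f13 has_sum V13) UNIV"
    and nn: "\<And>n. 0 \<le> (P * f11 n + R * f12 n - Q * f13 n) - ((P * f1 n + R * f2 n - Q * f3 n)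
       + al * (f4 n - f5 n) + be * (f6 n - f7 n) + ga * f8 n + de * f9 n + f10 n)"
  shows "P * V1 + R * V2 - Q * V3 + al * (V4 - V5) + be * (V6 - V7) + ga * V8 + de * V9 + V10
     \<le> P * V11 + R * V12 - Q * V13"
proof -
  have "((\<lambda>n. (P * f11 n + R * f12 n - Q * f13 n) - ((P * f1 n + R * f2 n - Q * f3 n)
       + al * (f4 n - f5 n) + be * (f6 n - f7 n) + ga * f8 n + de * f9 n + f10 n)) has_sum
     ((P * V11 + R * V12 - Q * V13) - ((P * V1 + R * V2 - Q * V3) + al * (V4 - V5) + be * (V6 - V7) + ga * V8 + de * V9 + V10))) UNIV"
    by (intro has_sum_add has_sum_diff' has_sum_cmult_right assms(1-13))
  from has_sum_nonneg[OF this nn] show ?thesis by simp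
qed

lemma Eterm_bound:
  fixes w u a b :: "int \<Rightarrow> real" and C p :: real
  assumes "a n > 0" "b n > 0" "C \<ge> 0" "p \<ge> 0" "\<bar>w n\<bar> \<le> C * \<bar>u n\<bar>" "\<bar>Delta w n\<bar> \<le> C * \<bar>Delta u n\<bar>"
  shows "\<bar>Eterm a b p w n\<bar> \<le> C powr p * Eterm a b p u n"
proof -
  have "\<bar>w n\<bar> powr p \<le> (C * \<bar>u n\<bar>) powr p" by (rule powr_mono2) (use assms in auto)
  also have "\<dots> = C powr p * \<bar>u n\<bar> powr p" using assms by (simp add: powr_mult)
  finally have h1: "\<bar>w n\<bar> powr p \<le> C powr p * \<bar>u n\<bar> powr p" .
  have "\<bar>Delta w n\<bar> powr p \<le> (C * \<bar>Delta u n\<bar>) powr p" by (rule powr_mono2) (use assms in auto)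
  also have "\<dots> = C powr p * \<bar>Delta u n\<bar> powr p" using assms by (simp add: powr_mult)
  finally have h2: "\<bar>Delta w n\<bar> powr p \<le> C powr p * \<bar>Delta u n\<bar> powr p" .
  have "Eterm a b p w n \<ge> 0" unfolding Eterm_def using assms by simp
  then have "\<bar>Eterm a b p w n\<bar> = a n * \<bar>Delta w n\<bar> powr p + b n * \<bar>w n\<bar> powr p" unfolding Eterm_def by simp
  also have "\<dots> \<le> a n * (C powr p * \<bar>Delta u n\<bar> powr p) + b n * (C powr p * \<bar>u n\<bar> powr p)"
    using h1 h2 assms by (intro add_mono mult_left_mono) auto
  also have "\<dots> = C powr p * Eterm a b p u n" unfolding Eterm_def by (simp add: algebra_simps)
  finally show ?thesis .
qed

lemma cbound:
  fixes W q r :: real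
  assumes "W \<ge> 0" "q \<ge> 0" "r \<ge> 1"
  shows "W powr q \<le> \<bar>W powr q * ln (W powr r)\<bar> + exp q"
proof (cases "W \<ge> exp 1")
  case True
  then have Wp: "W > 0" by (meson exp_gt_zero less_le_trans)
  have "ln W \<ge> 1" using True Wp by (metis ln_exp ln_le_cancel_iff exp_gt_zero)
  then have l: "ln (W powr r) \<ge> 1" using Wp assms by (simp add: ln_powr) (metis mult_mono' mult_1 zero_le_one order_trans)
  have "W powr q \<le> W powr q * ln (W powr r)" using l by (simp add: mult_le_cancel_left1)
  also have "\<dots> \<le> \<bar>W powr q * ln (W powr r)\<bar>" by (rule abs_ge_self)
  finally show ?thesis using exp_gt_zero[of q] by linarith
next
  case False
  have "W powr q \<le> (exp 1) powr q" by (rule powr_mono2) (use assms False in auto)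
  also have "\<dots> = exp q" by (simp add: powr_def)
  finally show ?thesis by simp
qed

lemma lvb:
  fixes W \<sigma> q r c :: real
  assumes "W > 0" "\<sigma> > 0" "c > 0" "r \<ge> 0"
  shows "\<bar>c * (\<sigma> * W) powr q * ln ((\<sigma> * W) powr r)\<bar>
     \<le> (\<sigma> powr q * r * \<bar>ln \<sigma>\<bar>) * (c * W powr q) + \<sigma> powr q * \<bar>c * W powr q * ln (W powr r)\<bar>"
proof -
  have "c * (\<sigma> * W) powr q * ln ((\<sigma> * W) powr r) = (\<sigma> powr q * r * ln \<sigma>) * (c * W powr q) + \<sigma> powr q * (c * W powr q * ln (W powr r))"
    using assms by (simp add: powr_mult ln_powr ln_mult algebra_simps)
  also have "\<bar>\<dots>\<bar> \<le> \<bar>(\<sigma> powr q * r * ln \<sigma>) * (c * W powr q)\<bar> + \<bar>\<sigma> powr q * (c * W powr q * ln (W powr r))\<bar>"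
    by (rule abs_triangle_ineq)
  also have "\<dots> = (\<sigma> powr q * r * \<bar>ln \<sigma>\<bar>) * (c * W powr q) + \<sigma> powr q * \<bar>c * W powr q * ln (W powr r)\<bar>"
    using assms by (simp add: abs_mult)
  finally show ?thesis .
qed

lemma gb:
  fixes z w a p :: real
  assumes "\<bar>w\<bar> \<le> \<bar>z\<bar>" "a \<ge> 0"
  shows "\<bar>a * \<bar>z\<bar> powr (p - 2) * z * w\<bar> \<le> a * \<bar>z\<bar> powr p"
proof (cases "z = 0")
  case True then show ?thesis using assms by simp
next
  case False
  have "\<bar>a * \<bar>z\<bar> powr (p - 2) * z * w\<bar> = a * \<bar>z\<bar> powr (p - 2) * \<bar>z\<bar> * \<bar>w\<bar>" using assms by (simp add: abs_mult)
  also have "\<dots> \<le> a * \<bar>z\<bar> powr (p - 2) * \<bar>z\<bar> * \<bar>z\<bar>" using assms by (intro mult_left_mono) auto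
  also have "\<dots> = a * (\<bar>\<bar>z\<bar>\<bar> powr (p - 2) * \<bar>z\<bar> * \<bar>z\<bar>)" by (simp add: algebra_simps)
  also have "\<dots> = a * \<bar>z\<bar> powr p" using sqpow[of "\<bar>z\<bar>" p] False by simp
  finally show ?thesis .
qed

lemma hpbound:
  fixes c U P q r :: real
  assumes "P = U \<or> P = 0"
  shows "\<bar>c * \<bar>U\<bar> powr (q - 2) * U * P * ln (\<bar>U\<bar> powr r)\<bar> \<le> \<bar>c * \<bar>U\<bar> powr q * ln (\<bar>U\<bar> powr r)\<bar>"
proof (cases "P = 0 \<or> U = 0")
  case True then show ?thesis using assms by auto
next
  case False
  then have "P = U" "U \<noteq> 0" using assms by auto
  then have "c * \<bar>U\<bar> powr (q - 2) * U * P * ln (\<bar>U\<bar> powr r) = c * (\<bar>U\<bar> powr (q - 2) * U * U) * ln (\<bar>U\<bar> powr r)"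
    by (simp add: algebra_simps)
  also have "\<dots> = c * \<bar>U\<bar> powr q * ln (\<bar>U\<bar> powr r)" using sqpow[OF \<open>U \<noteq> 0\<close>] by simp
  finally show ?thesis by (metis order_refl)
qed

lemma sbound:
  fixes x y D :: real and th :: "nat \<Rightarrow> nat \<Rightarrow> real"
  assumes "\<bar>x\<bar> \<le> \<bar>D\<bar>" "\<bar>y\<bar> \<le> \<bar>D\<bar>"
  shows "\<bar>\<Sum>i = 1..K - 1. \<Sum>j = 1..i - 1. 2 ^ (i - j) * \<bar>x ^ (2 * K - (i + j)) * y ^ (i + j)\<bar> * th i j\<bar>
     \<le> (\<Sum>i = 1..K - 1. \<Sum>j = 1..i - 1. 2 ^ (i - j) * \<bar>th i j\<bar>) * \<bar>D\<bar>^(2*K)"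
proof -
  have "\<bar>\<Sum>i = 1..K - 1. \<Sum>j = 1..i - 1. 2 ^ (i - j) * \<bar>x ^ (2 * K - (i + j)) * y ^ (i + j)\<bar> * th i j\<bar>
     \<le> (\<Sum>i = 1..K - 1. \<bar>\<Sum>j = 1..i - 1. 2 ^ (i - j) * \<bar>x ^ (2 * K - (i + j)) * y ^ (i + j)\<bar> * th i j\<bar>)"
    by (rule sum_abs)
  also have "\<dots> \<le> (\<Sum>i = 1..K - 1. \<Sum>j = 1..i - 1. \<bar>2 ^ (i - j) * \<bar>x ^ (2 * K - (i + j)) * y ^ (i + j)\<bar> * th i j\<bar>)"
    by (intro sum_mono sum_abs)
  also have "\<dots> \<le> (\<Sum>i = 1..K - 1. \<Sum>j = 1..i - 1. 2 ^ (i - j) * \<bar>th i j\<bar> * \<bar>D\<bar>^(2*K))"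
  proof (intro sum_mono)
    fix i j assume i: "i \<in> {1..K-1}" and j: "j \<in> {1..i-1}"
    have "i + j \<le> 2*K" using i j by auto
    have "\<bar>x ^ (2 * K - (i + j)) * y ^ (i + j)\<bar> = \<bar>x\<bar> ^ (2 * K - (i + j)) * \<bar>y\<bar> ^ (i + j)" by (simp add: abs_mult power_abs)
    also have "\<dots> \<le> \<bar>D\<bar> ^ (2 * K - (i + j)) * \<bar>D\<bar> ^ (i + j)"
      using assms by (intro mult_mono power_mono) auto
    also have "\<dots> = \<bar>D\<bar>^(2*K)" using \<open>i + j \<le> 2*K\<close> by (simp add: power_add[symmetric])
    finally have "\<bar>x ^ (2 * K - (i + j)) * y ^ (i + j)\<bar> \<le> \<bar>D\<bar>^(2*K)" .
    then show "\<bar>2 ^ (i - j) * \<bar>x ^ (2 * K - (i + j)) * y ^ (i + j)\<bar> * th i j\<bar> \<le> 2 ^ (i - j) * \<bar>th i j\<bar> * \<bar>D\<bar>^(2*K)"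
      by (simp add: abs_mult mult_left_mono mult_right_mono algebra_simps)
  qed
  also have "\<dots> = (\<Sum>i = 1..K - 1. \<Sum>j = 1..i - 1. 2 ^ (i - j) * \<bar>th i j\<bar>) * \<bar>D\<bar>^(2*K)"
    by (simp add: sum_distrib_right)
  finally show ?thesis .
qed

theorem lemma2p2:
  fixes p q r :: real and a b c :: "int \<Rightarrow> real"
  assumes hp: "1 < p" "p < q"
    and hp2: "p / 2 \<in> \<nat>" "p / 2 > 0"
    and hr: "r \<ge> 1"
    and ha: "\<And>n. a n > 0" and hb: "\<And>n. b n > 0" and hc: "\<And>n. c n > 0"
    and C1: "\<exists>b0>0. \<forall>n. b n \<ge> b0" "filterlim b at_top (sup at_top at_bot)"
    and C2: "\<exists>c0>0. \<forall>n. c n \<le> c0" "c summable_on UNIV"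
  shows "\<forall>u s t. inD a b c p q r u \<and> s \<ge> 0 \<and> t \<ge> 0 \<longrightarrow>
    (let K = nat \<lfloor>p / 2\<rfloor>; up = posp u; un = negp u in
      Ifun a b c p q r u \<ge>
        Ifun a b c p q r (\<lambda>n. s * up n + t * un n)
        + (1 - s powr q) / q * dI a b c p q r u up
        + (1 - t powr q) / q * dI a b c p q r u un
        + ((1 - s powr p) / p - (1 - s powr q) / q) * normE a b p up powr p
        + ((1 - t powr p) / p - (1 - t powr q) / q) * normE a b p un powr p
        + (\<Sum>\<^sub>\<infinity>n. a n * (\<Sum>i = 1..K - 1. \<Sum>j = 1..i - 1.
              2 ^ (i - j) * \<bar>Delta up n ^ (2 * K - (i + j)) * Delta un n ^ (i + j)\<bar>
              * Theta p K s t i j))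
      \<and> (\<forall>i \<in> {1..K - 1}. \<forall>j \<in> {1..i - 1}. Theta p K s t i j \<ge> 0))"
  apply (intro allI impI)
  subgoal premises prems for u s t
proof -
  note H = prems
  from H have uD: "inD a b c p q r u" and st: "s \<ge> 0" "t \<ge> 0" by auto
  obtain K :: nat where Kdef: "p / 2 = real K" using hp2(1) by (auto elim: Nats_cases)
  have K: "K \<ge> 1" using hp2(2) Kdef by simp
  have p: "p = 2 * real K" using Kdef by simp
  have Kfl: "nat \<lfloor>p / 2\<rfloor> = K" using Kdef by simp
  have pp: "p > 0" using hp by simp
  have qq: "q > 0" using hp by simp
  have r0: "r \<ge> 0" using hr by simp
  have sE: "Eterm a b p u summable_on UNIV" using uD unfolding inD_def inE_def by auto
  have sL: "(\<lambda>n. c n * \<bar>u n\<bar> powr q * ln (\<bar>u n\<bar> powr r)) summable_on UNIV" using uD unfolding inD_def by auto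
  have sLa: "(\<lambda>n. \<bar>c n * \<bar>u n\<bar> powr q * ln (\<bar>u n\<bar> powr r)\<bar>) summable_on UNIV"
    using sL summable_on_iff_abs_summable_on_real by force
  have sC: "(\<lambda>n. c n * \<bar>u n\<bar> powr q) summable_on UNIV"
  proof (rule summable_bound)
    show "(\<lambda>n. \<bar>c n * \<bar>u n\<bar> powr q * ln (\<bar>u n\<bar> powr r)\<bar> + exp q * c n) summable_on UNIV"
      by (intro summable_on_add sLa summable_on_cmult_right C2(2))
    fix n
    have "c n * \<bar>u n\<bar> powr q \<le> c n * (\<bar>\<bar>u n\<bar> powr q * ln (\<bar>u n\<bar> powr r)\<bar> + exp q)"
      using cbound[of "\<bar>u n\<bar>" q r] hr qq hc[of n] by (intro mult_left_mono) auto
    also have "\<dots> = \<bar>c n * \<bar>u n\<bar> powr q * ln (\<bar>u n\<bar> powr r)\<bar> + exp q * c n"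
      using hc[of n] by (simp add: abs_mult algebra_simps)
    finally show "\<bar>c n * \<bar>u n\<bar> powr q\<bar> \<le> \<bar>c n * \<bar>u n\<bar> powr q * ln (\<bar>u n\<bar> powr r)\<bar> + exp q * c n"
      using hc[of n] by simp
  qed
  have ab: "\<bar>posp u n\<bar> \<le> \<bar>u n\<bar>" "\<bar>negp u n\<bar> \<le> \<bar>u n\<bar>" for n
    unfolding posp_def negp_def by auto
  have ad: "\<bar>Delta (posp u) n\<bar> \<le> \<bar>Delta u n\<bar>" "\<bar>Delta (negp u) n\<bar> \<le> \<bar>Delta u n\<bar>" for n
    unfolding Delta_def posp_def negp_def by auto
  have vb: "\<bar>s * posp u n + t * negp u n\<bar> \<le> (s + t) * \<bar>u n\<bar>" for n
  proof -
    have "\<bar>s * posp u n + t * negp u n\<bar> \<le> s * \<bar>posp u n\<bar> + t * \<bar>negp u n\<bar>"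
      using st by (metis abs_mult abs_of_nonneg abs_triangle_ineq)
    also have "\<dots> \<le> s * \<bar>u n\<bar> + t * \<bar>u n\<bar>" using st ab[of n] by (intro add_mono mult_left_mono) auto
    finally show ?thesis by (simp add: algebra_simps)
  qed
  have dvb: "\<bar>Delta (\<lambda>n. s * posp u n + t * negp u n) n\<bar> \<le> (s + t) * \<bar>Delta u n\<bar>" for n
  proof -
    have "Delta (\<lambda>n. s * posp u n + t * negp u n) n = s * Delta (posp u) n + t * Delta (negp u) n"
      unfolding Delta_def by (simp add: algebra_simps)
    also have "\<bar>\<dots>\<bar> \<le> s * \<bar>Delta (posp u) n\<bar> + t * \<bar>Delta (negp u) n\<bar>"
      using st by (metis abs_mult abs_of_nonneg abs_triangle_ineq)
    also have "\<dots> \<le> s * \<bar>Delta u n\<bar> + t * \<bar>Delta u n\<bar>" using st ad[of n] by (intro add_mono mult_left_mono) auto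
    finally show ?thesis by (simp add: algebra_simps)
  qed
  have s1: "Eterm a b p (\<lambda>n. s * posp u n + t * negp u n) summable_on UNIV"
    by (rule summable_bound[OF summable_on_cmult_right[OF sE, of "(s+t) powr p"]])
       (rule Eterm_bound, use ha hb st pp vb dvb in auto)
  have s8: "Eterm a b p (posp u) summable_on UNIV"
    by (rule summable_bound[OF summable_on_cmult_right[OF sE, of "1 powr p"]])
       (rule Eterm_bound, use ha hb pp ab ad in auto)
  have s9: "Eterm a b p (negp u) summable_on UNIV"
    by (rule summable_bound[OF summable_on_cmult_right[OF sE, of "1 powr p"]])
       (rule Eterm_bound, use ha hb pp ab ad in auto)
  have s2: "(\<lambda>n. c n * \<bar>s * posp u n + t * negp u n\<bar> powr q) summable_on UNIV"
  proof (rule summable_bound[OF summable_on_cmult_right[OF sC, of "(s+t) powr q"]])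
    fix n
    have "\<bar>s * posp u n + t * negp u n\<bar> powr q \<le> ((s + t) * \<bar>u n\<bar>) powr q"
      by (rule powr_mono2) (use qq vb in auto)
    also have "\<dots> = (s+t) powr q * \<bar>u n\<bar> powr q" using st by (simp add: powr_mult)
    finally have "c n * \<bar>s * posp u n + t * negp u n\<bar> powr q \<le> c n * ((s+t) powr q * \<bar>u n\<bar> powr q)"
      using hc[of n] by (intro mult_left_mono) auto
    then show "\<bar>c n * \<bar>s * posp u n + t * negp u n\<bar> powr q\<bar> \<le> (s+t) powr q * (c n * \<bar>u n\<bar> powr q)"
      using hc[of n] by (simp add: algebra_simps)
  qed
  define L1 where "L1 = s powr q * r * \<bar>ln s\<bar> + t powr q * r * \<bar>ln t\<bar>"
  define L2 where "L2 = s powr q + t powr q"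
  have s3: "(\<lambda>n. c n * \<bar>s * posp u n + t * negp u n\<bar> powr q * ln (\<bar>s * posp u n + t * negp u n\<bar> powr r)) summable_on UNIV"
  proof (rule summable_bound[OF summable_on_add[OF summable_on_cmult_right[OF sC, of L1] summable_on_cmult_right[OF sLa, of L2]]])
    fix n
    have Cn: "c n * \<bar>u n\<bar> powr q \<ge> 0" "\<bar>c n * \<bar>u n\<bar> powr q * ln (\<bar>u n\<bar> powr r)\<bar> \<ge> 0" using hc[of n] by auto
    have L: "s powr q * r * \<bar>ln s\<bar> \<le> L1" "t powr q * r * \<bar>ln t\<bar> \<le> L1" "s powr q \<le> L2" "t powr q \<le> L2"
      unfolding L1_def L2_def using r0 by auto
    have gen: "\<bar>c n * (\<sigma> * \<bar>u n\<bar>) powr q * ln ((\<sigma> * \<bar>u n\<bar>) powr r)\<bar>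
        \<le> L1 * (c n * \<bar>u n\<bar> powr q) + L2 * \<bar>c n * \<bar>u n\<bar> powr q * ln (\<bar>u n\<bar> powr r)\<bar>"
      if "\<sigma> \<ge> 0" "\<sigma> powr q * r * \<bar>ln \<sigma>\<bar> \<le> L1" "\<sigma> powr q \<le> L2" for \<sigma>
    proof (cases "\<sigma> = 0 \<or> u n = 0")
      case True then show ?thesis using Cn L1_def L2_def r0
        by (auto intro!: add_nonneg_nonneg mult_nonneg_nonneg)
    next
      case False
      then have "\<sigma> > 0" "\<bar>u n\<bar> > 0" using that by auto
      from lvb[OF this(2) this(1) hc[of n] r0, of q]
      have "\<bar>c n * (\<sigma> * \<bar>u n\<bar>) powr q * ln ((\<sigma> * \<bar>u n\<bar>) powr r)\<bar>
        \<le> (\<sigma> powr q * r * \<bar>ln \<sigma>\<bar>) * (c n * \<bar>u n\<bar> powr q) + \<sigma> powr q * \<bar>c n * \<bar>u n\<bar> powr q * ln (\<bar>u n\<bar> powr r)\<bar>" .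
      also have "\<dots> \<le> L1 * (c n * \<bar>u n\<bar> powr q) + L2 * \<bar>c n * \<bar>u n\<bar> powr q * ln (\<bar>u n\<bar> powr r)\<bar>"
        using that Cn by (intro add_mono mult_right_mono) auto
      finally show ?thesis .
    qed
    consider "u n > 0" | "u n \<le> 0" by linarith
    then show "\<bar>c n * \<bar>s * posp u n + t * negp u n\<bar> powr q * ln (\<bar>s * posp u n + t * negp u n\<bar> powr r)\<bar>
        \<le> L1 * (c n * \<bar>u n\<bar> powr q) + L2 * \<bar>c n * \<bar>u n\<bar> powr q * ln (\<bar>u n\<bar> powr r)\<bar>"
    proof cases
      case 1
      then have "\<bar>s * posp u n + t * negp u n\<bar> = s * \<bar>u n\<bar>" using st by (simp add: posp_def negp_def abs_mult)
      then show ?thesis using gen[OF st(1) L(1) L(3)] by simp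
    next
      case 2
      then have "\<bar>s * posp u n + t * negp u n\<bar> = t * \<bar>u n\<bar>" using st by (simp add: posp_def negp_def abs_mult)
      then show ?thesis using gen[OF st(2) L(2) L(4)] by simp
    qed
  qed
  have gsum: "\<bar>a n * \<bar>Delta u n\<bar> powr (p - 2) * Delta u n * Delta w n + b n * \<bar>u n\<bar> powr (p - 2) * u n * w n\<bar> \<le> Eterm a b p u n"
    if "\<bar>w n\<bar> \<le> \<bar>u n\<bar>" "\<bar>Delta w n\<bar> \<le> \<bar>Delta u n\<bar>" for w n
  proof -
    have "\<bar>a n * \<bar>Delta u n\<bar> powr (p - 2) * Delta u n * Delta w n + b n * \<bar>u n\<bar> powr (p - 2) * u n * w n\<bar>
      \<le> \<bar>a n * \<bar>Delta u n\<bar> powr (p - 2) * Delta u n * Delta w n\<bar> + \<bar>b n * \<bar>u n\<bar> powr (p - 2) * u n * w n\<bar>"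
      by (rule abs_triangle_ineq)
    also have "\<dots> \<le> a n * \<bar>Delta u n\<bar> powr p + b n * \<bar>u n\<bar> powr p"
      using that ha[of n] hb[of n] by (intro add_mono gb) auto
    finally show ?thesis unfolding Eterm_def .
  qed
  have s4: "(\<lambda>n. a n * \<bar>Delta u n\<bar> powr (p - 2) * Delta u n * Delta (posp u) n + b n * \<bar>u n\<bar> powr (p - 2) * u n * posp u n) summable_on UNIV"
    by (rule summable_bound[OF sE]) (rule gsum, use ab ad in auto)
  have s6: "(\<lambda>n. a n * \<bar>Delta u n\<bar> powr (p - 2) * Delta u n * Delta (negp u) n + b n * \<bar>u n\<bar> powr (p - 2) * u n * negp u n) summable_on UNIV"
    by (rule summable_bound[OF sE]) (rule gsum, use ab ad in auto)
  have s5: "(\<lambda>n. c n * \<bar>u n\<bar> powr (q - 2) * u n * posp u n * ln (\<bar>u n\<bar> powr r)) summable_on UNIV"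
    by (rule summable_bound[OF sLa]) (rule hpbound, auto simp: posp_def)
  have s7: "(\<lambda>n. c n * \<bar>u n\<bar> powr (q - 2) * u n * negp u n * ln (\<bar>u n\<bar> powr r)) summable_on UNIV"
    by (rule summable_bound[OF sLa]) (rule hpbound, auto simp: negp_def)
  define Kc where "Kc = (\<Sum>i = 1..K - 1. \<Sum>j = 1..i - 1. 2 ^ (i - j) * \<bar>Theta p K s t i j\<bar>)"
  have s10: "(\<lambda>n. a n * (\<Sum>i = 1..K - 1. \<Sum>j = 1..i - 1.
              2 ^ (i - j) * \<bar>Delta (posp u) n ^ (2 * K - (i + j)) * Delta (negp u) n ^ (i + j)\<bar>
              * Theta p K s t i j)) summable_on UNIV"
  proof (rule summable_bound[OF summable_on_cmult_right[OF sE, of Kc]])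
    fix n
    have Kc0: "Kc \<ge> 0" unfolding Kc_def by (intro sum_nonneg) auto
    have "\<bar>a n * (\<Sum>i = 1..K - 1. \<Sum>j = 1..i - 1.
              2 ^ (i - j) * \<bar>Delta (posp u) n ^ (2 * K - (i + j)) * Delta (negp u) n ^ (i + j)\<bar>
              * Theta p K s t i j)\<bar> \<le> a n * (Kc * \<bar>Delta u n\<bar>^(2*K))"
      unfolding abs_mult[of "a n"] abs_of_pos[OF ha[of n]] Kc_def using ha[of n] sbound[OF ad(1)[of n] ad(2)[of n], of K "Theta p K s t"]
      by (intro mult_left_mono) auto
    also have "\<bar>Delta u n\<bar>^(2*K) = \<bar>Delta u n\<bar> powr p" unfolding pw1[OF K p] by (simp add: power_even_abs)
    also have "a n * (Kc * \<bar>Delta u n\<bar> powr p) \<le> Kc * Eterm a b p u n"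
      unfolding Eterm_def using Kc0 hb[of n] by (simp add: algebra_simps)
    finally show "\<bar>a n * (\<Sum>i = 1..K - 1. \<Sum>j = 1..i - 1.
              2 ^ (i - j) * \<bar>Delta (posp u) n ^ (2 * K - (i + j)) * Delta (negp u) n ^ (i + j)\<bar>
              * Theta p K s t i j)\<bar> \<le> Kc * Eterm a b p u n" .
  qed
  show ?thesis
    unfolding Let_def Kfl Ifun_def dI_def normE_pow[OF pp ha hb]
    apply (rule conjI)
    subgoal
      apply (rule combine[OF has_sum_infsum[OF s1] has_sum_infsum[OF s2] has_sum_infsum[OF s3]
         has_sum_infsum[OF s4] has_sum_infsum[OF s5] has_sum_infsum[OF s6] has_sum_infsum[OF s7]
         has_sum_infsum[OF s8] has_sum_infsum[OF s9] has_sum_infsum[OF s10] has_sum_infsum[OF sE]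
         has_sum_infsum[OF sC] has_sum_infsum[OF sL]])
      by (rule pointwise[OF K p hp(2) hr ha hb hc st])
    subgoal
      using Theta_nonneg[OF K _ _ _ st] unfolding p by auto
    done
qed
  done

end
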